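(* Any nef-partition $\Pi(\Delta)$ of a reflexive polytope $\Delta$ has a unique decomposition into a direct sum of irreducible nef-partitions.
   Context: Let $M\cong\mathbb Z^d$, $N=\mathrm{Hom}(M,\mathbb Z)$. A $d$-dimensional lattice polytope $\Delta\subset M_{\mathbb R}$ is reflexive if $\Delta=\{x:\langle x,e_k\rangle\ge-1,\ k=1,\dots,n\}$ with $e_k\in N$ the primitive inward facet normals. A nef-partition $\Pi(\Delta)=\{\Delta_1,\dots,\Delta_r\}$ is a Minkowski decomposition $\Delta=\Delta_1+\dots+\Delta_r$ into lattice polytopes such that $-\min_{x\in\Delta_j}\langle x,e_k\rangle\in\{0,1\}$ for all $j,k$. $\Pi(\Delta)$ splits into a direct sum $\Pi(\Delta^{(1)})\oplus\dots\oplus\Pi(\Delta^{(k)})$ if there are lattice polytopes $\Delta^{(1)},\dots,\Delta^{(k)}\subset\Delta$ with $\Delta=\Delta^{(1)}+\dots+\Delta^{(k)}$, $d=\sum_i\dim\Delta^{(i)}$, and for each $i$: $0$ lies in the relative interior of $\Delta^{(i)}$, $\Delta^{(i)}$ is reflexive, and $\Pi(\Delta^{(i)})=\{\Delta_j:\Delta_j\subset\Delta^{(i)}\}$ is a nef-partition of $\Delta^{(i)}$. A nef-partition is reducible if there is a subset $\{k_1,\dots,k_s\}\subset\{1,\dots,r\}$ with $0<s<r$ such that $0$ lies in the relative interior of $\Delta_{k_1}+\dots+\Delta_{k_s}$; otherwise it is irreducible. *)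

theory Defs
  imports "HOL-Analysis.Analysis" "HOL-Library.Set_Algebras"
begin

text \<open>The lattice M = Z^d is the set of integer points of real^'d; the dual lattice N is
  identified with integer vectors via the inner product.\<close>

definition lattice_point :: "real^'d \<Rightarrow> bool" where
  "lattice_point x \<longleftrightarrow> (\<forall>i. x $ i \<in> \<int>)"

definition lattice_polytope :: "(real^'d) set \<Rightarrow> bool" where
  "lattice_polytope P \<longleftrightarrow>
     (\<exists>V. finite V \<and> V \<noteq> {} \<and> (\<forall>v\<in>V. lattice_point v) \<and> P = convex hull V)"

text \<open>Minkowski sum of a finite family of sets (empty sum = {0}).\<close>
definition msum :: "(real^'d) set set \<Rightarrow> (real^'d) set" where
  "msum S = (\<Sum>P\<in>S. P)"

text \<open>Dual of the lattice M \<inter> L for a linear subspace L, realised inside L via the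
  inner product.\<close>
definition dual_lattice :: "(real^'d) set \<Rightarrow> (real^'d) set" where
  "dual_lattice L = {e \<in> L. \<forall>m\<in>L. lattice_point m \<longrightarrow> inner m e \<in> \<int>}"

definition primitive_in :: "(real^'d) set \<Rightarrow> real^'d \<Rightarrow> bool" where
  "primitive_in L e \<longleftrightarrow> e \<in> dual_lattice L \<and> e \<noteq> 0 \<and>
     \<not> (\<exists>k::int. k \<ge> 2 \<and> (1 / real_of_int k) *\<^sub>R e \<in> dual_lattice L)"

text \<open>Primitive inward facet normals of P, taken with respect to the lattice M \<inter> span P
  (for full-dimensional P this is N = Z^d).\<close>
definition facet_normals :: "(real^'d) set \<Rightarrow> (real^'d) set" where
  "facet_normals P = {e. primitive_in (span P) e \<and>
     (\<exists>F c. F facet_of P \<and> P \<subseteq> {x. inner x e \<ge> c} \<and> F \<subseteq> {x. inner x e = c})}"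

definition reflexive :: "(real^'d) set \<Rightarrow> bool" where
  "reflexive P \<longleftrightarrow> lattice_polytope P \<and>
     P = {x \<in> span P. \<forall>e\<in>facet_normals P. inner x e \<ge> -1}"

definition nef_partition :: "(real^'d) set \<Rightarrow> (real^'d) set set \<Rightarrow> bool" where
  "nef_partition P Parts \<longleftrightarrow> finite Parts \<and> Parts \<noteq> {} \<and>
     (\<forall>D\<in>Parts. lattice_polytope D \<and> D \<noteq> {0}) \<and> P = msum Parts \<and>
     (\<forall>D\<in>Parts. \<forall>e\<in>facet_normals P. - (INF x\<in>D. inner x e) \<in> {0, 1})"

definition reducible :: "(real^'d) set set \<Rightarrow> bool" where
  "reducible Parts \<longleftrightarrow> (\<exists>T. T \<subseteq> Parts \<and> T \<noteq> {} \<and> T \<noteq> Parts \<and> 0 \<in> rel_interior (msum T))"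

definition irreducible_nef :: "(real^'d) set set \<Rightarrow> bool" where
  "irreducible_nef Parts \<longleftrightarrow> \<not> reducible Parts"

definition parts_in :: "(real^'d) set set \<Rightarrow> (real^'d) set \<Rightarrow> (real^'d) set set" where
  "parts_in Parts Q = {D \<in> Parts. D \<subseteq> Q}"

definition direct_sum_split ::
  "(real^'d) set \<Rightarrow> (real^'d) set set \<Rightarrow> (real^'d) set set \<Rightarrow> bool" where
  "direct_sum_split Delta Parts S \<longleftrightarrow> finite S \<and> S \<noteq> {} \<and>
     (\<forall>Q\<in>S. lattice_polytope Q \<and> Q \<subseteq> Delta) \<and>
     Delta = msum S \<and>
     int CARD('d) = (\<Sum>Q\<in>S. aff_dim Q) \<and>
     (\<forall>Q\<in>S. 0 \<in> rel_interior Q \<and> reflexive Q \<and> nef_partition Q (parts_in Parts Q))"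

definition irreducible_decomposition ::
  "(real^'d) set \<Rightarrow> (real^'d) set set \<Rightarrow> (real^'d) set set \<Rightarrow> bool" where
  "irreducible_decomposition Delta Parts S \<longleftrightarrow> direct_sum_split Delta Parts S \<and>
     (\<forall>Q\<in>S. irreducible_nef (parts_in Parts Q))"

end

theory Submission
  imports Defs
begin

lemma set_plus_iff: "x \<in> A + B \<longleftrightarrow> (\<exists>a\<in>A. \<exists>b\<in>B. x = a + b)"
  by (auto simp: set_plus_def)

lemma set_plus_eq_sums: "A + B = {x + y | x y. x \<in> A \<and> y \<in> B}"
  by (auto simp: set_plus_def)

lemma compact_set_plus: fixes A B :: "'a::real_normed_vector set"
  shows "compact A \<Longrightarrow> compact B \<Longrightarrow> compact (A + B)"
  using compact_sums by (simp add: set_plus_eq_sums)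

lemma compact_set_sum: fixes B :: "'i \<Rightarrow> 'a::real_normed_vector set"
  shows "(\<And>i. i\<in>I \<Longrightarrow> compact (B i)) \<Longrightarrow> compact (\<Sum>i\<in>I. B i)"
  by (induction I rule: infinite_finite_induct) (auto intro: compact_set_plus)

lemma inf_attained:
  fixes A :: "'a::euclidean_space set"
  assumes "compact A" "A \<noteq> {}"
  obtains a where "a \<in> A" "(INF x\<in>A. inner x e) = inner a e" "\<And>x. x \<in> A \<Longrightarrow> inner a e \<le> inner x e"
proof -
  obtain a where a: "a \<in> A" "\<forall>y\<in>A. inner a e \<le> inner y e"
  proof -
    have "continuous_on A (\<lambda>x. inner x e)" by (intro continuous_intros)
    then show ?thesis using continuous_attains_inf[OF assms, of "\<lambda>x. inner x e"] that by blast
  qed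
  have "(INF x\<in>A. inner x e) = inner a e"
    using a by (intro cInf_eq_minimum) auto
  then show ?thesis using a that by auto
qed

lemma inf_le:
  fixes A :: "'a::euclidean_space set"
  assumes "compact A" "x \<in> A"
  shows "(INF x\<in>A. inner x e) \<le> inner x e"
  using inf_attained[OF assms(1), of e] assms(2) by (metis empty_iff)

lemma inf_set_plus:
  fixes A B :: "'a::euclidean_space set"
  assumes "compact A" "A \<noteq> {}" "compact B" "B \<noteq> {}"
  shows "(INF x\<in>A+B. inner x e) = (INF x\<in>A. inner x e) + (INF x\<in>B. inner x e)"
proof -
  obtain a where a: "a \<in> A" "(INF x\<in>A. inner x e) = inner a e" "\<And>x. x \<in> A \<Longrightarrow> inner a e \<le> inner x e"
    using inf_attained[OF assms(1,2)] by metis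
  obtain b where b: "b \<in> B" "(INF x\<in>B. inner x e) = inner b e" "\<And>x. x \<in> B \<Longrightarrow> inner b e \<le> inner x e"
    using inf_attained[OF assms(3,4)] by metis
  have "(INF x\<in>A+B. inner x e) = inner (a+b) e"
  proof (rule cInf_eq_minimum)
    show "inner (a + b) e \<in> (\<lambda>x. inner x e) ` (A + B)" using a b by (auto simp: set_plus_iff)
    fix y assume "y \<in> (\<lambda>x. inner x e) ` (A + B)"
    then obtain a' b' where "a' \<in> A" "b' \<in> B" "y = inner (a'+b') e" by (auto simp: set_plus_iff)
    then show "inner (a + b) e \<le> y" using a(3) b(3) by (simp add: inner_add_left add_mono)
  qed
  then show ?thesis using a b by (simp add: inner_add_left)
qed

lemma set_plus_cancel:
  fixes A B C :: "'a::euclidean_space set"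
  assumes "A + C \<subseteq> B + C" "closed B" "convex B" "compact C" "C \<noteq> {}"
  shows "A \<subseteq> B"
proof
  fix p assume p: "p \<in> A"
  show "p \<in> B"
  proof (rule ccontr)
    assume "p \<notin> B"
    then obtain u b where ub: "inner u p < b" "\<forall>x\<in>B. inner u x > b"
      using separating_hyperplane_closed_point[OF assms(3,2)] by blast
    obtain c where c: "c \<in> C" "\<And>x. x \<in> C \<Longrightarrow> inner c u \<le> inner x u"
      using inf_attained[OF assms(4,5), of u] by metis
    have "p + c \<in> B + C" using assms(1) p c(1) by (auto simp: set_plus_iff)
    then obtain b' c' where bc: "b' \<in> B" "c' \<in> C" "p + c = b' + c'" by (auto simp: set_plus_iff)
    then have "inner u (p + c) = inner u b' + inner u c'" by (simp add: inner_add_right)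
    moreover have "inner u b' > b" using ub bc(1) by auto
    moreover have "inner c u \<le> inner c' u" using c bc(2) by auto
    ultimately show False using ub(1) by (simp add: inner_add_right inner_commute)
  qed
qed

lemma lattice_point_0: "lattice_point 0"
  by (simp add: lattice_point_def)

lemma lattice_point_add: "lattice_point a \<Longrightarrow> lattice_point b \<Longrightarrow> lattice_point (a + b)"
  by (simp add: lattice_point_def)

lemma lattice_polytope_props:
  assumes "lattice_polytope P"
  shows "compact P" "convex P" "P \<noteq> {}" "polytope P"
  using assms unfolding lattice_polytope_def polytope_def
  by (auto intro: finite_imp_compact_convex_hull)

lemma lattice_polytope_face_vertex:
  assumes "lattice_polytope P" "F face_of P" "F \<noteq> {}"
  obtains v where "v \<in> F" "lattice_point v"
proof -
  obtain V where V: "finite V" "V \<noteq> {}" "\<forall>v\<in>V. lattice_point v" "P = convex hull V"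
    using assms(1) lattice_polytope_def by blast
  have "compact F" using face_of_imp_compact[of P F] assms lattice_polytope_props by blast
  moreover have "convex F" using face_of_imp_convex assms(2) by blast
  ultimately obtain v where "v extreme_point_of F" using extreme_point_exists_convex assms(3) by blast
  then have "v extreme_point_of P" "v \<in> F" using extreme_point_of_face assms(2) by blast+
  then have "v \<in> V" using extreme_point_of_convex_hull V(4) by blast
  then show ?thesis using that V \<open>v\<in>F\<close> by blast
qed

lemma lattice_polytope_plus:
  assumes "lattice_polytope P" "lattice_polytope Q" shows "lattice_polytope (P + Q)"
proof -
  obtain V where V: "finite V" "V \<noteq> {}" "\<forall>v\<in>V. lattice_point v" "P = convex hull V"
    using assms(1) lattice_polytope_def by blast
  obtain W where W: "finite W" "W \<noteq> {}" "\<forall>v\<in>W. lattice_point v" "Q = convex hull W"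
    using assms(2) lattice_polytope_def by blast
  have "P + Q = convex hull (V + W)" by (simp add: convex_hull_set_plus V W)
  moreover have "finite (V + W)" using V W by (simp add: finite_set_plus)
  moreover have "V + W \<noteq> {}" using V W by (auto simp: set_plus_iff)
  moreover have "\<forall>v\<in>V+W. lattice_point v" using V W by (auto simp: set_plus_iff intro!: lattice_point_add)
  ultimately show ?thesis unfolding lattice_polytope_def by blast
qed

lemma lattice_polytope_msum:
  "finite T \<Longrightarrow> \<forall>D\<in>T. lattice_polytope D \<Longrightarrow> lattice_polytope (msum T)"
proof (induction T rule: finite_induct)
  case empty
  have "msum {} = convex hull {0::real^'a}" by (simp add: msum_def)
  then show ?case unfolding lattice_polytope_def using lattice_point_0 by blast
next
  case (insert D T)
  then show ?case by (simp add: msum_def lattice_polytope_plus)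
qed

lemma primitive_ratio_aux:
  assumes p: "primitive_in L e" and sub: "subspace L"
    and e': "e' \<in> dual_lattice L"
    and cop: "coprime a b" and b2: "b \<ge> (2::int)"
    and eq: "real_of_int b *\<^sub>R e' = real_of_int a *\<^sub>R e"
  shows False
proof -
  have eL: "e \<in> L" using p by (simp add: primitive_in_def dual_lattice_def)
  have "(1 / real_of_int b) *\<^sub>R e \<in> dual_lattice L"
    unfolding dual_lattice_def
  proof (intro CollectI conjI ballI impI)
    show "(1 / real_of_int b) *\<^sub>R e \<in> L" using eL sub by (simp add: subspace_scale)
    fix m assume m: "m \<in> L" "lattice_point m"
    have "inner m e \<in> \<int>" using p m by (auto simp: primitive_in_def dual_lattice_def)
    then obtain n1 where n1: "inner m e = of_int n1" by (auto elim: Ints_cases)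
    have "inner m e' \<in> \<int>" using e' m by (auto simp: dual_lattice_def)
    then obtain n2 where n2: "inner m e' = of_int n2" by (auto elim: Ints_cases)
    have "inner m (real_of_int b *\<^sub>R e') = inner m (real_of_int a *\<^sub>R e)" using eq by simp
    then have "real_of_int (b * n2) = real_of_int (a * n1)" using n1 n2 by simp
    then have "b * n2 = a * n1" by (simp only: of_int_eq_iff)
    then have "b dvd n1 * a" by (metis dvd_triv_left mult.commute)
    moreover have "coprime b a" using cop by (simp add: ac_simps)
    ultimately have "b dvd n1" using coprime_dvd_mult_left_iff by blast
    then obtain k where "n1 = b * k" by blast
    then have "inner m ((1 / real_of_int b) *\<^sub>R e) = of_int k" using n1 b2 by simp
    then show "inner m ((1 / real_of_int b) *\<^sub>R e) \<in> \<int>" by simp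
  qed
  then show False using p b2 unfolding primitive_in_def by blast
qed

lemma primitive_unique:
  assumes p1: "primitive_in L e1" and p2: "primitive_in L e2" and sub: "subspace L"
    and A: "A > 0" and B: "B > (0::int)" and eq: "real_of_int B *\<^sub>R e2 = real_of_int A *\<^sub>R e1"
  shows "e1 = e2"
proof -
  define g where "g = gcd A B"
  have g0: "g > 0" using A g_def by simp
  define a where "a = A div g"
  define b where "b = B div g"
  have Aeq: "A = a * g" and Beq: "B = b * g" unfolding a_def b_def g_def by simp_all
  have cop: "coprime a b" unfolding a_def b_def g_def using A by (intro div_gcd_coprime) auto
  have a0: "a > 0" using A g0 Aeq by (metis zero_less_mult_pos2)
  have b0: "b > 0" using B g0 Beq by (metis zero_less_mult_pos2)
  have "real_of_int B *\<^sub>R e2 - real_of_int A *\<^sub>R e1 = 0" using eq by simp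
  then have "real_of_int g *\<^sub>R (real_of_int b *\<^sub>R e2 - real_of_int a *\<^sub>R e1) = 0"
    unfolding Aeq Beq by (simp add: scaleR_diff_right scaleR_scaleR mult.commute)
  then have "real_of_int b *\<^sub>R e2 - real_of_int a *\<^sub>R e1 = 0" using g0 by simp
  then have eq': "real_of_int b *\<^sub>R e2 = real_of_int a *\<^sub>R e1" by simp
  have d2: "e2 \<in> dual_lattice L" using p2 by (simp add: primitive_in_def)
  have d1: "e1 \<in> dual_lattice L" using p1 by (simp add: primitive_in_def)
  have b1: "b = 1"
  proof (rule ccontr)
    assume "b \<noteq> 1" then have "b \<ge> 2" using b0 by linarith
    then show False using primitive_ratio_aux[OF p1 sub d2 cop _ eq'] by blast
  qed
  have a1: "a = 1"
  proof (rule ccontr)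
    assume "a \<noteq> 1" then have "a \<ge> 2" using a0 by linarith
    then show False using primitive_ratio_aux[OF p2 sub d1 _ _ eq'[symmetric]] cop
      by (simp add: coprime_commute)
  qed
  show ?thesis using eq' a1 b1 by simp
qed

locale nefctx =
  fixes Delta :: "(real^'d) set" and Parts :: "(real^'d) set set"
  assumes full: "aff_dim Delta = int CARD('d)"
    and refl: "reflexive Delta"
    and nef: "nef_partition Delta Parts"
begin

abbreviation FN where "FN \<equiv> facet_normals Delta"

lemma affhull_UNIV: "affine hull Delta = UNIV"
  using full aff_dim_eq_full[of Delta] by simp

lemma span_UNIV: "span Delta = UNIV"
  using affhull_UNIV affine_hull_subset_span by blast

lemma Delta_eq: "Delta = {x. \<forall>e\<in>FN. inner x e \<ge> -1}"
  using refl span_UNIV unfolding reflexive_def by auto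

lemma Delta_mem: "x \<in> Delta \<longleftrightarrow> (\<forall>e\<in>FN. inner x e \<ge> -1)"
  using Delta_eq by blast

lemma FN_ge: "e \<in> FN \<Longrightarrow> x \<in> Delta \<Longrightarrow> inner x e \<ge> -1"
  using Delta_mem by blast

lemma Delta_lat: "lattice_polytope Delta"
  using refl reflexive_def by blast

lemmas Delta_props = lattice_polytope_props[OF Delta_lat]

lemma FN_def2: "e \<in> FN \<longleftrightarrow> primitive_in UNIV e \<and>
     (\<exists>F c. F facet_of Delta \<and> Delta \<subseteq> {x. inner x e \<ge> c} \<and> F \<subseteq> {x. inner x e = c})"
  unfolding facet_normals_def span_UNIV by simp

lemma FN_int: "e \<in> FN \<Longrightarrow> lattice_point m \<Longrightarrow> inner m e \<in> \<int>"
  unfolding FN_def2 primitive_in_def dual_lattice_def by auto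

lemma FN_nz: "e \<in> FN \<Longrightarrow> e \<noteq> 0"
  unfolding FN_def2 primitive_in_def by auto

lemma same_facet:
  assumes e1: "e1 \<in> FN" and e2: "e2 \<in> FN" and F: "F facet_of Delta"
    and s1: "Delta \<subseteq> {x. inner x e1 \<ge> c1}" "F \<subseteq> {x. inner x e1 = c1}"
    and s2: "Delta \<subseteq> {x. inner x e2 \<ge> c2}" "F \<subseteq> {x. inner x e2 = c2}"
  shows "e1 = e2"
proof -
  obtain V where V: "finite V" "V \<noteq> {}" "\<forall>v\<in>V. lattice_point v" "Delta = convex hull V"
    using Delta_lat lattice_polytope_def by blast
  have Ff: "F face_of Delta" "F \<noteq> {}" "aff_dim F = aff_dim Delta - 1"
    using F facet_of_def by auto
  obtain v where v: "v \<in> F" "lattice_point v"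
    using lattice_polytope_face_vertex[OF Delta_lat Ff(1,2)] by blast
  have c1: "c1 = inner v e1" and c2: "c2 = inner v e2" using v s1 s2 by auto
  have "\<exists>p\<in>V. p \<notin> affine hull F"
  proof (rule ccontr)
    assume "\<not> ?thesis"
    then have "V \<subseteq> affine hull F" by blast
    then have "convex hull V \<subseteq> affine hull F"
      by (intro hull_minimal affine_imp_convex affine_affine_hull)
    then have "Delta \<subseteq> affine hull F" using V(4) by simp
    then have "aff_dim Delta \<le> aff_dim (affine hull F)" by (rule aff_dim_subset)
    then show False using Ff(3) by simp
  qed
  then obtain p where p: "p \<in> V" "p \<notin> affine hull F" by (elim bexE)
  have pD: "p \<in> Delta" using p(1) V(4) hull_inc[of p V convex] by simp
  have ins: "aff_dim (insert p F) = int CARD('d)"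
    using aff_dim_insert[of p F] p Ff(3) full by simp
  have hyp: "inner p e \<noteq> c" if "e \<noteq> 0" "F \<subseteq> {x. inner x e = c}" for e c
  proof
    assume "inner p e = c"
    then have "insert p F \<subseteq> {x. e \<bullet> x = c}" using that by (auto simp: inner_commute)
    then have "aff_dim (insert p F) \<le> aff_dim {x. e \<bullet> x = c}" by (rule aff_dim_subset)
    then show False using ins that(1) by simp
  qed
  have g1: "inner p e1 - c1 > 0" using hyp[OF FN_nz[OF e1] s1(2)] s1(1) pD by force
  have g2: "inner p e2 - c2 > 0" using hyp[OF FN_nz[OF e2] s2(2)] s2(1) pD by force
  have "inner p e1 - c1 \<in> \<int>" using c1 FN_int[OF e1] v p V(3) by auto
  then obtain G1 where G1: "inner p e1 - c1 = of_int G1" by (auto elim: Ints_cases)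
  have "inner p e2 - c2 \<in> \<int>" using c2 FN_int[OF e2] v p V(3) by auto
  then obtain G2 where G2: "inner p e2 - c2 = of_int G2" by (auto elim: Ints_cases)
  define w where "w = real_of_int G1 *\<^sub>R e2 - real_of_int G2 *\<^sub>R e1"
  define k where "k = real_of_int G1 * c2 - real_of_int G2 * c1"
  have "insert p F \<subseteq> {x. w \<bullet> x = k}"
  proof
    fix x assume "x \<in> insert p F"
    then consider "x = p" | "x \<in> F" by blast
    then show "x \<in> {x. w \<bullet> x = k}"
    proof cases
      case 1
      have "w \<bullet> p = real_of_int G1 * inner p e2 - real_of_int G2 * inner p e1"
        unfolding w_def by (simp add: inner_diff_left inner_diff_right inner_commute[of _ p])
      also have "\<dots> = k" unfolding k_def using G1 G2 by (simp add: algebra_simps)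
      finally show ?thesis using 1 by simp
    next
      case 2
      then have "inner x e1 = c1" "inner x e2 = c2" using s1 s2 by auto
      then show ?thesis unfolding w_def k_def by (simp add: inner_diff_left inner_diff_right inner_commute[of _ x])
    qed
  qed
  then have "affine hull (insert p F) \<subseteq> {x. w \<bullet> x = k}"
    by (intro hull_minimal affine_hyperplane)
  then have all: "\<And>x. w \<bullet> x = k" using aff_dim_eq_full[of "insert p F"] ins by auto
  have "k = 0" using all[of 0] by simp
  then have "w \<bullet> w = 0" using all[of w] by simp
  then have "w = 0" by simp
  then have eq: "real_of_int G1 *\<^sub>R e2 = real_of_int G2 *\<^sub>R e1" unfolding w_def by simp
  have p1: "primitive_in UNIV e1" using e1 FN_def2 by blast
  have p2: "primitive_in UNIV e2" using e2 FN_def2 by blast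
  have "G1 > 0" using g1 G1 by simp
  moreover have "G2 > 0" using g2 G2 by simp
  ultimately show ?thesis
    using primitive_unique[OF p1 p2 subspace_UNIV, of G2 G1] eq by blast
qed

lemma FN_finite: "finite FN"
proof -
  define P where "P e F \<longleftrightarrow> (\<exists>c. F facet_of Delta \<and> Delta \<subseteq> {x. inner x e \<ge> c} \<and> F \<subseteq> {x. inner x e = c})" for e F
  define phi where "phi e = (SOME F. P e F)" for e
  have phiP: "P e (phi e)" if "e \<in> FN" for e
  proof -
    have "\<exists>F. P e F" using that unfolding FN_def2 P_def by blast
    then show ?thesis unfolding phi_def by (rule someI_ex)
  qed
  have "inj_on phi FN"
  proof (rule inj_onI)
    fix e1 e2 assume "e1 \<in> FN" "e2 \<in> FN" "phi e1 = phi e2"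
    then obtain c1 c2 where "phi e1 facet_of Delta" "Delta \<subseteq> {x. inner x e1 \<ge> c1}" "phi e1 \<subseteq> {x. inner x e1 = c1}"
       "Delta \<subseteq> {x. inner x e2 \<ge> c2}" "phi e1 \<subseteq> {x. inner x e2 = c2}"
      using phiP[of e1] phiP[of e2] unfolding P_def by auto
    then show "e1 = e2" using same_facet \<open>e1 \<in> FN\<close> \<open>e2 \<in> FN\<close> by blast
  qed
  moreover have "phi ` FN \<subseteq> {F. F face_of Delta}"
    using phiP unfolding P_def facet_of_def by auto
  moreover have "finite {F. F face_of Delta}" using finite_polytope_faces Delta_props(4) by blast
  ultimately show ?thesis using inj_on_finite by blast
qed

lemma zero_interior: obtains r where "r > 0" "ball 0 r \<subseteq> Delta"
proof -
  define Op where "Op = (\<Inter>e\<in>FN. {x. inner x e > -1})"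
  have "open Op" unfolding Op_def
    by (rule open_INT[OF FN_finite]) (simp add: open_halfspace_component_gt)
  moreover have "0 \<in> Op" unfolding Op_def by simp
  ultimately obtain r where "r > 0" "ball 0 r \<subseteq> Op" using open_contains_ball by blast
  moreover have "Op \<subseteq> Delta"
  proof
    fix x assume "x \<in> Op"
    then have "\<forall>e\<in>FN. inner x e \<ge> -1" unfolding Op_def by fastforce
    then show "x \<in> Delta" using Delta_mem by blast
  qed
  ultimately show ?thesis using that by blast
qed

lemma FN_bounded: assumes "\<forall>e\<in>FN. inner x e = 0" shows "x = 0"
proof (rule ccontr)
  assume nz: "x \<noteq> 0"
  obtain B where B: "B > 0" "\<forall>y\<in>Delta. norm y \<le> B"
    using compact_imp_bounded[OF Delta_props(1)] bounded_pos by blast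
  define t where "t = (B + 1) / norm x"
  have "t *\<^sub>R x \<in> Delta" unfolding Delta_mem using assms by simp
  then have "norm (t *\<^sub>R x) \<le> B" using B by blast
  moreover have "norm (t *\<^sub>R x) = B + 1" unfolding t_def using nz B by simp
  ultimately show False by simp
qed

lemma FN_level: assumes e: "e \<in> FN"
  obtains v where "v \<in> Delta" "inner v e = -1" "lattice_point v"
proof -
  obtain F c where F: "F facet_of Delta" "Delta \<subseteq> {x. inner x e \<ge> c}" "F \<subseteq> {x. inner x e = c}"
    using e FN_def2 by blast
  obtain v where v: "v \<in> F" "lattice_point v"
    using lattice_polytope_face_vertex[OF Delta_lat, of F] F(1) by (auto simp: facet_of_def)
  have vD: "v \<in> Delta" using v F(1) face_of_imp_subset facet_of_def by blast
  have cv: "c = inner v e" using v F by auto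
  have "c \<in> \<int>" using cv FN_int[OF e v(2)] by simp
  then obtain n where n: "c = of_int n" by (auto elim: Ints_cases)
  have "c \<ge> -1" using cv vD FN_ge e by auto
  moreover have "c < 0"
  proof -
    obtain r where r: "r > 0" "ball 0 r \<subseteq> Delta" using zero_interior by blast
    have ne: "norm e > 0" using FN_nz[OF e] by simp
    define x0 where "x0 = - (r / (2 * norm e)) *\<^sub>R e"
    have "norm x0 = r / 2" unfolding x0_def using ne r by simp
    then have "x0 \<in> Delta" using r by auto
    then have "c \<le> inner x0 e" using F by auto
    also have "inner x0 e = - (r / (2 * norm e)) * (norm e)^2"
      unfolding x0_def by (simp add: power2_norm_eq_inner)
    also have "\<dots> < 0" using ne r by (simp add: power2_eq_square)
    finally show ?thesis .
  qed
  ultimately have "n = -1" using n by linarith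
  then show ?thesis using that vD v cv n by simp
qed

end

lemma ray_bounded:
  fixes a :: "'a::real_normed_vector"
  assumes "bounded S" "\<And>s. s \<ge> 0 \<Longrightarrow> s *\<^sub>R a \<in> S"
  shows "a = 0"
proof (rule ccontr)
  assume nz: "a \<noteq> 0"
  obtain B where B: "B > 0" "\<forall>y\<in>S. norm y \<le> B"
    using assms(1) bounded_pos by blast
  define t where "t = (B + 1) / norm a"
  have "t \<ge> 0" unfolding t_def using B by simp
  then have "norm (t *\<^sub>R a) \<le> B" using B assms(2) by blast
  moreover have "norm (t *\<^sub>R a) = B + 1" unfolding t_def using nz B by simp
  ultimately show False by simp
qed

context nefctx begin

definition hh :: "(real^'d) set \<Rightarrow> real^'d \<Rightarrow> real" where "hh D e = (INF x\<in>D. inner x e)"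

lemma Parts_fin: "finite Parts" and Parts_ne: "Parts \<noteq> {}"
  and Parts_lat: "D \<in> Parts \<Longrightarrow> lattice_polytope D"
  and Parts_nz: "D \<in> Parts \<Longrightarrow> D \<noteq> {0}"
  and Delta_msum: "Delta = msum Parts"
  using nef unfolding nef_partition_def by auto

lemma Parts_nef: assumes "D \<in> Parts" "e \<in> FN" shows "hh D e = 0 \<or> hh D e = -1"
proof -
  have "\<forall>D\<in>Parts. \<forall>e\<in>FN. - (INF x\<in>D. inner x e) \<in> {0, 1}"
    using nef unfolding nef_partition_def by blast
  then have "- hh D e \<in> {0, 1}" using assms unfolding hh_def by blast
  then show ?thesis by auto
qed

lemma msum_empty: "msum {} = {0}" by (simp add: msum_def)

lemma msum_insert: "finite T \<Longrightarrow> D \<notin> T \<Longrightarrow> msum (insert D T) = D + msum T"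
  by (simp add: msum_def)

lemma msum_lat: "T \<subseteq> Parts \<Longrightarrow> lattice_polytope (msum T)"
  using lattice_polytope_msum[of T] Parts_lat finite_subset[OF _ Parts_fin] by blast

lemma msum_compact: "T \<subseteq> Parts \<Longrightarrow> compact (msum T)"
  and msum_convex: "T \<subseteq> Parts \<Longrightarrow> convex (msum T)"
  and msum_ne: "T \<subseteq> Parts \<Longrightarrow> msum T \<noteq> {}"
  using lattice_polytope_props[OF msum_lat] by auto

lemma hh_le: "T \<subseteq> Parts \<Longrightarrow> x \<in> msum T \<Longrightarrow> hh (msum T) e \<le> inner x e"
  unfolding hh_def by (rule inf_le[OF msum_compact])

lemma hh_msum0: "finite T \<Longrightarrow> T \<subseteq> Parts \<Longrightarrow> hh (msum T) e = (\<Sum>D\<in>T. hh D e)"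
  proof (induction T rule: finite_induct)
    case empty
    then show ?case by (simp add: msum_empty hh_def)
  next
    case (insert D T)
    have DP: "D \<in> Parts" and TP: "T \<subseteq> Parts" using insert by auto
    have "hh (msum (insert D T)) e = hh (D + msum T) e" using msum_insert[OF insert(1,2)] by simp
    also have "\<dots> = hh D e + hh (msum T) e" unfolding hh_def
      using lattice_polytope_props[OF Parts_lat[OF DP]] msum_compact[OF TP] msum_ne[OF TP]
      by (intro inf_set_plus) auto
    finally show ?case using insert by simp
  qed

lemma hh_msum: "T \<subseteq> Parts \<Longrightarrow> hh (msum T) e = (\<Sum>D\<in>T. hh D e)"
  using hh_msum0 finite_subset[OF _ Parts_fin] by blast

lemma hh_Delta: "e \<in> FN \<Longrightarrow> hh Delta e = -1"
proof -
  assume e: "e \<in> FN"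
  obtain v where v: "v \<in> Delta" "inner v e = -1" using FN_level[OF e] by blast
  show ?thesis unfolding hh_def
  proof (rule cInf_eq_minimum)
    show "-1 \<in> (\<lambda>x. inner x e) ` Delta" using v by (metis image_eqI)
    fix y assume "y \<in> (\<lambda>x. inner x e) ` Delta"
    then show "-1 \<le> y" using FN_ge[OF e] by auto
  qed
qed

lemma hhT: assumes T: "T \<subseteq> Parts" and e: "e \<in> FN"
  shows "hh (msum T) e = 0 \<or> hh (msum T) e = -1"
    "hh (msum T) e + hh (msum (Parts - T)) e = -1"
proof -
  have fin: "finite T" "finite (Parts - T)" using T finite_subset Parts_fin by auto
  have ints: "(\<Sum>D\<in>S. hh D e) \<in> \<int>" "(\<Sum>D\<in>S. hh D e) \<le> 0" if "S \<subseteq> Parts" for S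
  proof -
    have "\<forall>D\<in>S. hh D e \<in> \<int> \<and> hh D e \<le> 0"
    proof
      fix D assume "D \<in> S"
      then have "hh D e = 0 \<or> hh D e = -1" using Parts_nef that e by blast
      then show "hh D e \<in> \<int> \<and> hh D e \<le> 0" by auto
    qed
    then show "(\<Sum>D\<in>S. hh D e) \<in> \<int>" "(\<Sum>D\<in>S. hh D e) \<le> 0"
      by (auto intro: Ints_sum sum_nonpos)
  qed
  have "(\<Sum>D\<in>Parts. hh D e) = (\<Sum>D\<in>Parts - T. hh D e) + (\<Sum>D\<in>T. hh D e)"
    using sum.subset_diff[OF T Parts_fin] by simp
  moreover have "(\<Sum>D\<in>Parts. hh D e) = -1" using hh_msum[of Parts] hh_Delta[OF e] Delta_msum by simp
  ultimately have sum: "hh (msum T) e + hh (msum (Parts - T)) e = -1"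
    using hh_msum[OF T] hh_msum[of "Parts - T"] by auto
  then show "hh (msum T) e + hh (msum (Parts - T)) e = -1" .
  obtain a where a: "hh (msum T) e = of_int a" using ints(1)[OF T] hh_msum[OF T] by (auto elim: Ints_cases)
  obtain b where b: "hh (msum (Parts - T)) e = of_int b" using ints(1)[of "Parts - T"] hh_msum[of "Parts - T"]
    by (auto elim: Ints_cases)
  have "a \<le> 0" using ints(2)[OF T] hh_msum[OF T] a by simp
  moreover have "b \<le> 0" using ints(2)[of "Parts - T"] hh_msum[of "Parts - T"] b by simp
  moreover have "a + b = -1" using sum a b by (simp flip: of_int_add)
  ultimately have "a = 0 \<or> a = -1" by linarith
  then show "hh (msum T) e = 0 \<or> hh (msum T) e = -1" using a by auto
qed

lemma hh_nonpos: "T \<subseteq> Parts \<Longrightarrow> e \<in> FN \<Longrightarrow> hh (msum T) e \<le> 0"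
proof -
  assume a: "T \<subseteq> Parts" "e \<in> FN"
  show ?thesis using hhT(1)[OF a] by auto
qed

lemma msum_split: "T \<subseteq> U \<Longrightarrow> U \<subseteq> Parts \<Longrightarrow> msum U = msum T + msum (U - T)"
proof -
  assume "T \<subseteq> U" "U \<subseteq> Parts"
  then have "finite U" using finite_subset Parts_fin by blast
  then show ?thesis unfolding msum_def using sum.subset_diff[OF \<open>T \<subseteq> U\<close>, of "\<lambda>P. P"]
    by (simp add: add.commute)
qed

lemma msum_desc: assumes T: "T \<subseteq> Parts"
  shows "msum T = {x. \<forall>e\<in>FN. inner x e \<ge> hh (msum T) e}"
proof
  show "msum T \<subseteq> {x. \<forall>e\<in>FN. inner x e \<ge> hh (msum T) e}" using hh_le[OF T] by auto
  let ?A = "{x. \<forall>e\<in>FN. inner x e \<ge> hh (msum T) e}"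
  have TP: "Parts - T \<subseteq> Parts" by auto
  have "?A + msum (Parts - T) \<subseteq> msum T + msum (Parts - T)"
  proof
    fix z assume "z \<in> ?A + msum (Parts - T)"
    then obtain x c where xc: "x \<in> ?A" "c \<in> msum (Parts - T)" "z = x + c" by (auto simp: set_plus_iff)
    have "\<forall>e\<in>FN. inner z e \<ge> -1"
    proof
      fix e assume e: "e \<in> FN"
      have "inner z e = inner x e + inner c e" using xc(3) by (simp add: inner_add_left)
      moreover have "inner x e \<ge> hh (msum T) e" using xc(1) e by auto
      moreover have "inner c e \<ge> hh (msum (Parts - T)) e" using hh_le[OF TP xc(2)] by simp
      ultimately show "inner z e \<ge> -1" using hhT(2)[OF T e] by linarith
    qed
    then have "z \<in> Delta" using Delta_mem by blast
    then show "z \<in> msum T + msum (Parts - T)" using msum_split[OF T] Delta_msum by auto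
  qed
  then show "?A \<subseteq> msum T"
    by (rule set_plus_cancel[OF _ compact_imp_closed[OF msum_compact[OF T]] msum_convex[OF T] msum_compact[OF TP] msum_ne[OF TP]])
qed

lemma msum_memI: assumes "T \<subseteq> Parts" "\<And>e. e \<in> FN \<Longrightarrow> inner x e \<ge> hh (msum T) e"
  shows "x \<in> msum T"
  by (subst msum_desc[OF assms(1)]) (use assms(2) in blast)

lemma zero_in: "T \<subseteq> Parts \<Longrightarrow> 0 \<in> msum T"
  by (rule msum_memI) (auto simp: hh_nonpos)

lemma msum_mono: "T \<subseteq> U \<Longrightarrow> U \<subseteq> Parts \<Longrightarrow> msum T \<subseteq> msum U"
proof
  fix x assume TU: "T \<subseteq> U" "U \<subseteq> Parts" and x: "x \<in> msum T"
  have "0 \<in> msum (U - T)" using zero_in TU by blast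
  then have "x + 0 \<in> msum T + msum (U - T)" using x by (rule set_plus_intro[rotated])
  then show "x \<in> msum U" using msum_split[OF TU] by simp
qed

lemma part_sub: "D \<in> T \<Longrightarrow> T \<subseteq> Parts \<Longrightarrow> D \<subseteq> msum T"
  using msum_mono[of "{D}" T] by (simp add: msum_def)

lemma msum_sub_Delta: "T \<subseteq> Parts \<Longrightarrow> msum T \<subseteq> Delta"
  using msum_mono[of T Parts] Delta_msum by simp

definition Tc where "Tc = {T. T \<subseteq> Parts \<and> 0 \<in> rel_interior (msum T)}"
definition ET where "ET T = {e\<in>FN. hh (msum T) e = -1}"
definition LL where "LL T = {x. \<forall>e\<in>FN - ET T. inner x e = 0}"

lemma LL_subspace: "subspace (LL T)"
  unfolding subspace_def LL_def by (auto simp: inner_add_left)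

lemma ET_compl: assumes T: "T \<subseteq> Parts" shows "ET (Parts - T) = FN - ET T"
proof -
  have "hh (msum (Parts - T)) e = -1 \<longleftrightarrow> hh (msum T) e \<noteq> -1" if "e \<in> FN" for e
    using hhT[OF T that] by linarith
  then show ?thesis unfolding ET_def by blast
qed

lemma LL_compl: assumes T: "T \<subseteq> Parts" shows "LL (Parts - T) = {x. \<forall>e\<in>ET T. inner x e = 0}"
proof -
  have "FN - ET (Parts - T) = ET T" unfolding ET_compl[OF T] using ET_def by auto
  then show ?thesis unfolding LL_def by simp
qed

lemma LL_inter: "T \<subseteq> Parts \<Longrightarrow> x \<in> LL T \<Longrightarrow> x \<in> LL (Parts - T) \<Longrightarrow> x = 0"
  using LL_compl[of T] FN_bounded[of x] unfolding LL_def by blast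

lemma Tc_sub_LL: assumes "T \<in> Tc" shows "msum T \<subseteq> LL T"
proof
  fix x assume x: "x \<in> msum T"
  have T: "T \<subseteq> Parts" and ri: "0 \<in> rel_interior (msum T)" using assms Tc_def by auto
  obtain r where r: "r > 0" "ball 0 r \<inter> affine hull (msum T) \<subseteq> msum T"
    using ri mem_rel_interior_ball by blast
  have ah: "affine hull (msum T) = span (msum T)"
    using zero_in[OF T] by (intro affine_hull_span_0) (simp add: hull_inc)
  show "x \<in> LL T" unfolding LL_def
  proof (intro CollectI ballI)
    fix e assume e: "e \<in> FN - ET T"
    then have h0: "hh (msum T) e = 0" using hhT(1)[OF T] ET_def by auto
    have ge: "inner x e \<ge> 0" using hh_le[OF T x, of e] h0 by simp
    show "inner x e = 0"
    proof (rule ccontr)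
      assume "inner x e \<noteq> 0"
      then have pos: "inner x e > 0" using ge by simp
      then have nx: "x \<noteq> 0" by auto
      define y where "y = - (r / (2 * norm x)) *\<^sub>R x"
      have "y \<in> span (msum T)" unfolding y_def using x by (intro span_scale span_base)
      moreover have "norm y < r" unfolding y_def using nx r by simp
      ultimately have "y \<in> msum T" using r ah by auto
      then have "inner y e \<ge> 0" using hh_le[OF T, of y e] h0 by simp
      moreover have "inner y e < 0" unfolding y_def using pos nx r
        by (simp add: mult_pos_pos)
      ultimately show False by simp
    qed
  qed
qed

lemma compl_sub_LL: assumes "T \<in> Tc" shows "msum (Parts - T) \<subseteq> LL (Parts - T)"
proof
  fix x assume x: "x \<in> msum (Parts - T)"
  have T: "T \<subseteq> Parts" using assms Tc_def by auto
  have TP: "Parts - T \<subseteq> Parts" by auto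
  show "x \<in> LL (Parts - T)" unfolding LL_compl[OF T]
  proof (intro CollectI ballI)
    fix e assume e: "e \<in> ET T"
    have eF: "e \<in> FN" and h1: "hh (msum T) e = -1" using e ET_def by auto
    have h0: "hh (msum (Parts - T)) e = 0" using hhT(2)[OF T eF] h1 by simp
    have ge: "inner x e \<ge> 0" using hh_le[OF TP x, of e] h0 by simp
    show "inner x e = 0"
    proof (rule ccontr)
      assume "inner x e \<noteq> 0"
      then have pos: "inner x e > 0" using ge by simp
      then have nx: "x \<noteq> 0" by auto
      obtain r where r: "r > 0" "ball 0 r \<subseteq> Delta" using zero_interior by blast
      define t where "t = r / (2 * norm x)"
      have t0: "t > 0" unfolding t_def using r nx by simp
      have "norm (- t *\<^sub>R x) < r" unfolding t_def using nx r by simp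
      then have "- t *\<^sub>R x \<in> Delta" using r by auto
      then have "- t *\<^sub>R x \<in> msum T + msum (Parts - T)" using msum_split[OF T] Delta_msum by simp
      then obtain a b where ab: "a \<in> msum T" "b \<in> msum (Parts - T)" "- t *\<^sub>R x = a + b"
        by (auto simp: set_plus_iff)
      have aL: "a \<in> LL T" using Tc_sub_LL[OF assms] ab(1) by blast
      have ale: "inner a e' \<le> 0" if e': "e' \<in> FN" for e'
      proof (cases "e' \<in> ET T")
        case True
        have h0': "hh (msum (Parts - T)) e' = 0" using hhT(2)[OF T e'] True ET_def by simp
        have "inner b e' \<ge> 0" using hh_le[OF TP ab(2), of e'] h0' by simp
        moreover have "inner x e' \<ge> 0" using hh_le[OF TP x, of e'] h0' by simp
        moreover have "inner a e' = - t * inner x e' - inner b e'"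
          using arg_cong[OF ab(3), of "\<lambda>z. inner z e'"] by (simp add: inner_add_left)
        moreover have "t * inner x e' \<ge> 0" using t0 \<open>inner x e' \<ge> 0\<close> by simp
        ultimately show ?thesis by linarith
      next
        case False
        then show ?thesis using aL e' unfolding LL_def by auto
      qed
      have "- a = 0"
      proof (rule ray_bounded[of "msum T"])
        show "bounded (msum T)" using msum_compact[OF T] compact_imp_bounded by blast
        fix s :: real assume s: "s \<ge> 0"
        show "s *\<^sub>R (- a) \<in> msum T"
        proof (rule msum_memI[OF T])
          fix e' assume e': "e' \<in> FN"
          have "inner (s *\<^sub>R (- a)) e' = - s * inner a e'" by simp
          moreover have "- s * inner a e' \<ge> 0" using ale[OF e'] s by (simp add: mult_nonneg_nonpos)
          ultimately show "inner (s *\<^sub>R (- a)) e' \<ge> hh (msum T) e'" using hh_nonpos[OF T e'] by linarith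
        qed
      qed
      then have "a = 0" by simp
      then have "- t *\<^sub>R x = b" using ab(3) by simp
      then have "inner b e = - t * inner x e" by (metis inner_minus_left inner_scaleR_left mult_minus_left)
      moreover have "inner b e \<ge> 0" using hh_le[OF TP ab(2), of e] h0 by simp
      moreover have "t * inner x e > 0" using t0 pos by simp
      ultimately show False by linarith
    qed
  qed
qed

lemma compl_Tc: assumes "T \<in> Tc" shows "Parts - T \<in> Tc"
proof -
  have T: "T \<subseteq> Parts" using assms Tc_def by auto
  have TP: "Parts - T \<subseteq> Parts" by auto
  obtain r where r: "r > 0" "ball 0 r \<subseteq> Delta" using zero_interior by blast
  have "affine hull (msum (Parts - T)) \<subseteq> LL (Parts - T)"
    using compl_sub_LL[OF assms] by (intro hull_minimal subspace_imp_affine LL_subspace)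
  then have "ball 0 r \<inter> affine hull (msum (Parts - T)) \<subseteq> msum (Parts - T)"
  proof (intro subsetI)
    fix y assume y: "y \<in> ball 0 r \<inter> affine hull (msum (Parts - T))" and
      sub: "affine hull (msum (Parts - T)) \<subseteq> LL (Parts - T)"
    then have yD: "y \<in> Delta" and yL: "y \<in> LL (Parts - T)" using r by auto
    show "y \<in> msum (Parts - T)"
    proof (rule msum_memI[OF TP])
      fix e assume e: "e \<in> FN"
      show "inner y e \<ge> hh (msum (Parts - T)) e"
      proof (cases "e \<in> ET T")
        case True
        then show ?thesis using yL LL_compl[OF T] hh_nonpos[OF TP e] by auto
      next
        case False
        then have "hh (msum (Parts - T)) e = -1" using hhT[OF T e] ET_def e by auto
        then show ?thesis using FN_ge[OF e yD] by simp
      qed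
    qed
  qed
  then have "0 \<in> rel_interior (msum (Parts - T))"
    using mem_rel_interior_ball zero_in[OF TP] r(1) by blast
  then show ?thesis unfolding Tc_def by auto
qed

lemma Tc_Int: assumes "T \<in> Tc" "U \<in> Tc" shows "T \<inter> U \<in> Tc"
proof -
  have T: "T \<subseteq> Parts" and U: "U \<subseteq> Parts" using assms Tc_def by auto
  have TU: "T \<inter> U \<subseteq> Parts" using T by auto
  obtain r where r: "r > 0" "ball 0 r \<inter> affine hull (msum U) \<subseteq> msum U"
    using assms(2) Tc_def mem_rel_interior_ball by blast
  have "ball 0 r \<inter> affine hull (msum (T \<inter> U)) \<subseteq> msum (T \<inter> U)"
  proof
    fix y assume y: "y \<in> ball 0 r \<inter> affine hull (msum (T \<inter> U))"
    have "affine hull (msum (T \<inter> U)) \<subseteq> affine hull (msum U)"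
      using msum_mono[of "T \<inter> U" U] U by (intro hull_mono) auto
    then have "y \<in> msum U" using y r by blast
    then have "y \<in> msum (T \<inter> U) + msum (U - (T \<inter> U))" using msum_split[of "T \<inter> U" U] U by auto
    then obtain a b where ab: "a \<in> msum (T \<inter> U)" "b \<in> msum (U - (T \<inter> U))" "y = a + b"
      by (auto simp: set_plus_iff)
    have "b \<in> msum (Parts - T)" using ab(2) msum_mono[of "U - (T \<inter> U)" "Parts - T"] U by auto
    then have bL2: "b \<in> LL (Parts - T)" using compl_sub_LL[OF assms(1)] by blast
    have aT: "a \<in> msum T" using ab(1) msum_mono[of "T \<inter> U" T] T by auto
    then have aL: "a \<in> LL T" using Tc_sub_LL[OF assms(1)] by blast
    have "affine hull (msum (T \<inter> U)) \<subseteq> LL T"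
      using msum_mono[of "T \<inter> U" T] T Tc_sub_LL[OF assms(1)]
      by (intro hull_minimal subspace_imp_affine LL_subspace) auto
    then have "y \<in> LL T" using y by blast
    then have "b \<in> LL T" using aL ab(3) LL_subspace subspace_diff[of "LL T" y a] by simp
    then have "b = 0" using LL_inter[OF T _ bL2] by simp
    then show "y \<in> msum (T \<inter> U)" using ab by simp
  qed
  then have "0 \<in> rel_interior (msum (T \<inter> U))"
    using mem_rel_interior_ball zero_in[OF TU] r(1) by blast
  then show ?thesis unfolding Tc_def using TU by auto
qed

lemma Tc_sub: "T \<in> Tc \<Longrightarrow> T \<subseteq> Parts" unfolding Tc_def by auto

lemma Tc_Un: assumes "T \<in> Tc" "U \<in> Tc" shows "T \<union> U \<in> Tc"
proof -
  have eq: "T \<union> U = Parts - ((Parts - T) \<inter> (Parts - U))" using Tc_sub assms by auto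
  have "Parts - ((Parts - T) \<inter> (Parts - U)) \<in> Tc" using compl_Tc Tc_Int assms by simp
  then show ?thesis using eq by simp
qed

lemma Tc_empty: "{} \<in> Tc" unfolding Tc_def by (simp add: msum_empty)

lemma Tc_Parts: "Parts \<in> Tc" using compl_Tc[OF Tc_empty] by simp

lemma Tc_diff: "T \<in> Tc \<Longrightarrow> U \<in> Tc \<Longrightarrow> T - U \<in> Tc"
proof -
  assume a: "T \<in> Tc" "U \<in> Tc"
  then have eq: "T - U = T \<inter> (Parts - U)" using Tc_sub by auto
  have "T \<inter> (Parts - U) \<in> Tc" using a compl_Tc Tc_Int by simp
  then show ?thesis using eq by simp
qed

lemma part_in: assumes "T \<in> Tc" "D \<in> Parts" "D \<subseteq> msum T" shows "D \<in> T"
proof (rule ccontr)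
  assume "D \<notin> T"
  then have "D \<subseteq> msum (Parts - T)" using part_sub[of D "Parts - T"] assms(2) by auto
  then have "D \<subseteq> LL (Parts - T)" using compl_sub_LL[OF assms(1)] by blast
  moreover have "D \<subseteq> LL T" using assms(3) Tc_sub_LL[OF assms(1)] by blast
  ultimately have "D \<subseteq> {0}" using LL_inter Tc_sub[OF assms(1)] by blast
  moreover have "D \<noteq> {}" using lattice_polytope_props(3)[OF Parts_lat[OF assms(2)]] .
  ultimately show False using Parts_nz[OF assms(2)] by blast
qed

end

context nefctx begin

lemma Tc_span_sub: "T \<in> Tc \<Longrightarrow> span (msum T) \<subseteq> LL T"
  using Tc_sub_LL span_minimal LL_subspace by blast

lemma Tc_aff: "T \<in> Tc \<Longrightarrow> affine hull (msum T) = span (msum T)"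
  using zero_in[OF Tc_sub] by (intro affine_hull_span_0) (simp add: hull_inc)

lemma Tc_affdim: assumes "T \<in> Tc" shows "aff_dim (msum T) = int (dim (msum T))"
proof -
  have "aff_dim (msum T) = aff_dim (affine hull (msum T))" by simp
  also have "\<dots> = aff_dim (span (msum T))" using Tc_aff[OF assms] by simp
  also have "\<dots> = int (dim (span (msum T)))" by (rule aff_dim_subspace) simp
  finally show ?thesis by simp
qed

lemma Q_mem_iff: assumes T: "T \<in> Tc" and x: "x \<in> span (msum T)"
  shows "x \<in> msum T \<longleftrightarrow> (\<forall>e\<in>ET T. inner x e \<ge> -1)"
proof
  have TP: "T \<subseteq> Parts" using Tc_sub[OF T] .
  show "\<forall>e\<in>ET T. inner x e \<ge> -1" if xm: "x \<in> msum T"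
  proof
    fix e assume "e \<in> ET T"
    then have "hh (msum T) e = -1" unfolding ET_def by simp
    then show "inner x e \<ge> -1" using hh_le[OF TP xm, of e] by simp
  qed
  assume a: "\<forall>e\<in>ET T. inner x e \<ge> -1"
  show "x \<in> msum T"
  proof (rule msum_memI[OF TP])
    fix e assume e: "e \<in> FN"
    show "inner x e \<ge> hh (msum T) e"
    proof (cases "e \<in> ET T")
      case True
      then show ?thesis using a ET_def by auto
    next
      case False
      then have "inner x e = 0" using Tc_span_sub[OF T] x e unfolding LL_def by blast
      then show ?thesis using hh_nonpos[OF TP e] by simp
    qed
  qed
qed

lemma ET_finite: "finite (ET T)"
  using FN_finite unfolding ET_def by simp

lemma ET_FN: "e \<in> ET T \<Longrightarrow> e \<in> FN" unfolding ET_def by simp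

lemma Q_relint: assumes T: "T \<in> Tc" and z: "z \<in> msum T" and gt: "\<forall>e\<in>ET T. inner z e > -1"
  shows "z \<in> rel_interior (msum T)"
proof -
  define Op where "Op = (\<Inter>e\<in>ET T. {x. inner x e > -1})"
  have "open Op" unfolding Op_def
    by (rule open_INT[OF ET_finite]) (simp add: open_halfspace_component_gt)
  moreover have "z \<in> Op" unfolding Op_def using gt by simp
  ultimately obtain r where r: "r > 0" "ball z r \<subseteq> Op" using open_contains_ball by blast
  have "ball z r \<inter> affine hull (msum T) \<subseteq> msum T"
  proof
    fix y assume y: "y \<in> ball z r \<inter> affine hull (msum T)"
    then have ys: "y \<in> span (msum T)" using Tc_aff[OF T] by simp
    have "\<forall>e\<in>ET T. inner y e \<ge> -1" using y r unfolding Op_def by fastforce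
    then show "y \<in> msum T" using Q_mem_iff[OF T ys] by blast
  qed
  then show ?thesis using mem_rel_interior_ball z r(1) by blast
qed

definition pr :: "(real^'d) set set \<Rightarrow> real^'d \<Rightarrow> real^'d" where
  "pr T e = (SOME y. y \<in> span (msum T) \<and> (\<forall>w\<in>span (msum T). inner w y = inner w e))"

lemma pr_ex: "\<exists>y. y \<in> span (msum T) \<and> (\<forall>w\<in>span (msum T). inner w y = inner w e)"
proof -
  obtain y z where yz: "y \<in> span (msum T)" "\<And>w. w \<in> span (msum T) \<Longrightarrow> orthogonal z w" "e = y + z"
    using orthogonal_subspace_decomp_exists[of "msum T" e] by metis
  have "inner w y = inner w e" if "w \<in> span (msum T)" for w
    using yz(2)[OF that] yz(3) by (simp add: inner_add_right orthogonal_def inner_commute)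
  then show ?thesis using yz(1) by blast
qed

lemma pr_span: "pr T e \<in> span (msum T)"
  and pr_inner: "w \<in> span (msum T) \<Longrightarrow> inner w (pr T e) = inner w e"
  using someI_ex[OF pr_ex[of T e]] unfolding pr_def by auto

lemma facet_tight: assumes T: "T \<in> Tc" and F: "F facet_of (msum T)"
  obtains e where "e \<in> ET T" "F \<subseteq> {x. inner x e = -1}"
proof -
  have TP: "T \<subseteq> Parts" using Tc_sub[OF T] .
  have Ff: "F face_of msum T" "F \<noteq> {}" "aff_dim F = aff_dim (msum T) - 1" using F facet_of_def by auto
  have "convex F" using face_of_imp_convex Ff(1) by blast
  then obtain z where z: "z \<in> rel_interior F" using rel_interior_eq_empty Ff(2) by blast
  have zF: "z \<in> F" using z rel_interior_subset by blast
  have FQ: "F \<subseteq> msum T" using Ff(1) face_of_imp_subset by blast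
  have "F \<noteq> msum T" using Ff(3) by auto
  then have "z \<notin> rel_interior (msum T)" using face_of_disjoint_rel_interior[OF Ff(1)] zF by blast
  then obtain e where e: "e \<in> ET T" "\<not> inner z e > -1" using Q_relint[OF T] FQ zF by blast
  have "inner z e \<ge> -1" using Q_mem_iff[OF T] FQ zF e(1) span_base by blast
  then have ze: "inner z e = -1" using e(2) by simp
  have face: "(msum T \<inter> {x. e \<bullet> x = -1}) face_of msum T"
  proof (rule face_of_Int_supporting_hyperplane_ge)
    show "convex (msum T)" using msum_convex[OF TP] .
    fix x assume "x \<in> msum T"
    then show "e \<bullet> x \<ge> -1" using Q_mem_iff[OF T] e(1) span_base by (fastforce simp: inner_commute)
  qed
  have "F \<subseteq> msum T \<inter> {x. e \<bullet> x = -1}"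
    using subset_of_face_of[OF face FQ] z zF FQ ze by (force simp: inner_commute)
  then have "F \<subseteq> {x. inner x e = -1}" by (auto simp: inner_commute)
  then show ?thesis using that e(1) by blast
qed

lemma span_sub: "T \<in> Tc \<Longrightarrow> x \<in> msum T \<Longrightarrow> x \<in> span (msum T)"
  by (rule span_base)

lemma pr_normal: assumes T: "T \<in> Tc" and F: "F facet_of (msum T)"
  and e: "e \<in> ET T" and Fe: "F \<subseteq> {x. inner x e = -1}"
  shows "pr T e \<in> facet_normals (msum T)"
proof -
  have TP: "T \<subseteq> Parts" using Tc_sub[OF T] .
  have FQ: "F \<subseteq> msum T" using F facet_of_def face_of_imp_subset by blast
  obtain v where v: "v \<in> F" "lattice_point v"
    using lattice_polytope_face_vertex[OF msum_lat[OF TP], of F] F by (auto simp: facet_of_def)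
  have vs: "v \<in> span (msum T)" using v FQ span_base by blast
  have pv: "inner v (pr T e) = -1" using pr_inner[OF vs] v Fe by auto
  have dual: "pr T e \<in> dual_lattice (span (msum T))"
    unfolding dual_lattice_def using pr_span pr_inner FN_int[OF ET_FN[OF e]] by auto
  have notk: "\<not> (\<exists>k::int. k \<ge> 2 \<and> (1 / real_of_int k) *\<^sub>R pr T e \<in> dual_lattice (span (msum T)))"
  proof
    assume "\<exists>k::int. k \<ge> 2 \<and> (1 / real_of_int k) *\<^sub>R pr T e \<in> dual_lattice (span (msum T))"
    then obtain k :: int where k: "k \<ge> 2" "(1 / real_of_int k) *\<^sub>R pr T e \<in> dual_lattice (span (msum T))" by blast
    then have "inner v ((1 / real_of_int k) *\<^sub>R pr T e) \<in> \<int>" using vs v(2) unfolding dual_lattice_def by blast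
    then have "1 / real_of_int k \<in> \<int>" using pv by simp
    then obtain n where n: "1 / real_of_int k = of_int n" by (erule Ints_cases)
    have "real_of_int k \<ge> 2" using k by simp
    then have "1 / real_of_int k < 1" "1 / real_of_int k > 0" by (auto simp: field_simps)
    then have "real_of_int n < 1" "real_of_int n > 0" using n by auto
    then have "n < 1" "n > 0" by linarith+
    then show False by simp
  qed
  have prim: "primitive_in (span (msum T)) (pr T e)"
    unfolding primitive_in_def using dual notk pv by auto
  have "msum T \<subseteq> {x. -1 \<le> inner x (pr T e)}"
  proof
    fix x assume x: "x \<in> msum T"
    have xs: "x \<in> span (msum T)" using x by (rule span_base)
    have "inner x e \<ge> -1" using Q_mem_iff[OF T xs] x e by blast
    then show "x \<in> {x. -1 \<le> inner x (pr T e)}" using pr_inner[OF xs] by simp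
  qed
  moreover have "F \<subseteq> {x. inner x (pr T e) = -1}"
  proof
    fix x assume x: "x \<in> F"
    have xs: "x \<in> span (msum T)" using x FQ by (intro span_base) blast
    show "x \<in> {x. inner x (pr T e) = -1}" using pr_inner[OF xs] x Fe by auto
  qed
  ultimately have "\<exists>F c. F facet_of msum T \<and> msum T \<subseteq> {x. c \<le> inner x (pr T e)} \<and> F \<subseteq> {x. inner x (pr T e) = c}"
    using F by blast
  then show ?thesis unfolding facet_normals_def using prim by blast
qed

lemma normal_is_pr: assumes T: "T \<in> Tc" and e': "e' \<in> facet_normals (msum T)"
  obtains e where "e \<in> ET T" "e' = pr T e"
proof -
  have TP: "T \<subseteq> Parts" using Tc_sub[OF T] .
  let ?Q = "msum T"
  obtain F c where prim: "primitive_in (span ?Q) e'" and F: "F facet_of ?Q"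
    and Qc: "?Q \<subseteq> {x. inner x e' \<ge> c}" and Fc: "F \<subseteq> {x. inner x e' = c}"
    using e' unfolding facet_normals_def by blast
  obtain e where e: "e \<in> ET T" and Fe: "F \<subseteq> {x. inner x e = -1}" using facet_tight[OF T F] by blast
  have Ff: "F face_of ?Q" "F \<noteq> {}" "aff_dim F = aff_dim ?Q - 1" using F facet_of_def by auto
  have FQ: "F \<subseteq> ?Q" using Ff(1) face_of_imp_subset by blast
  have e'd: "e' \<in> dual_lattice (span ?Q)" using prim unfolding primitive_in_def by simp
  then have e'L: "e' \<in> span ?Q" unfolding dual_lattice_def by simp
  have e'int: "inner m e' \<in> \<int>" if "m \<in> span ?Q" "lattice_point m" for m
    using e'd that unfolding dual_lattice_def by simp
  have e'nz: "e' \<noteq> 0" using prim unfolding primitive_in_def by blast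
  have "affine hull F \<subseteq> {x. e \<bullet> x = -1}"
    using Fe by (intro hull_minimal affine_hyperplane) (auto simp: inner_commute)
  then have n0: "0 \<notin> affine hull F" by auto
  have "aff_dim (insert 0 F) = aff_dim F + 1" using aff_dim_insert[of 0 F] n0 by simp
  also have "\<dots> = int (dim ?Q)" using Ff(3) Tc_affdim[OF T] by simp
  finally have ad: "aff_dim (insert 0 F) = int (dim ?Q)" .
  have "affine hull (insert 0 F) = span (insert 0 F)"
    by (intro affine_hull_span_0) (simp add: hull_inc)
  then have "aff_dim (affine hull (insert 0 F)) = aff_dim (span F)" by simp
  then have "aff_dim (insert 0 F) = aff_dim (span F)" by (simp only: aff_dim_affine_hull)
  also have "\<dots> = int (dim (span F))" by (rule aff_dim_subspace) simp
  finally have "dim (span F) = dim ?Q" using ad by simp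
  then have spF: "span F = span ?Q"
    using subspace_dim_equal[of "span F" "span ?Q"] span_mono[OF FQ] by simp
  define w where "w = e' + c *\<^sub>R pr T e"
  have "F \<subseteq> {x. inner x w = 0}"
  proof
    fix x assume x: "x \<in> F"
    have xs: "x \<in> span ?Q" using x FQ by (intro span_base) blast
    then have "inner x (pr T e) = -1" using pr_inner[OF xs] x Fe by auto
    then show "x \<in> {x. inner x w = 0}" using x Fc unfolding w_def by (auto simp: inner_add_right)
  qed
  moreover have "subspace {x. inner x w = 0}"
    unfolding subspace_def by (auto simp: inner_add_left)
  ultimately have "span F \<subseteq> {x. inner x w = 0}" by (rule span_minimal)
  moreover have "w \<in> span ?Q" unfolding w_def using e'L pr_span by (intro span_add span_scale) auto
  ultimately have "inner w w = 0" using spF by blast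
  then have "w = 0" by simp
  then have e'eq: "e' = (- c) *\<^sub>R pr T e" unfolding w_def by (simp add: eq_neg_iff_add_eq_0)
  obtain v where v: "v \<in> F" "lattice_point v"
    using lattice_polytope_face_vertex[OF msum_lat[OF TP] Ff(1,2)] by blast
  have cv: "c = inner v e'" using v Fc by auto
  have vs: "v \<in> span ?Q" using v FQ by (intro span_base) blast
  have "c \<in> \<int>" using cv e'int[OF vs v(2)] by simp
  then obtain n where n: "c = of_int n" by (auto elim: Ints_cases)
  have "c \<le> 0" using Qc zero_in[OF TP] by auto
  moreover have "c \<noteq> 0" using e'eq e'nz by auto
  ultimately have nneg: "n \<le> -1" using n by simp
  have "n = -1"
  proof (rule ccontr)
    assume "n \<noteq> -1"
    then have k2: "- n \<ge> 2" using nneg by simp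
    have "(1 / real_of_int (- n)) *\<^sub>R e' = ((1 / real_of_int (- n)) * (- c)) *\<^sub>R pr T e"
      using e'eq by (simp only: scaleR_scaleR)
    also have "(1 / real_of_int (- n)) * (- c) = 1" using n k2 by simp
    finally have eq1: "(1 / real_of_int (- n)) *\<^sub>R e' = pr T e" by simp
    have "pr T e \<in> dual_lattice (span ?Q)"
      unfolding dual_lattice_def using pr_span pr_inner FN_int[OF ET_FN[OF e]] by auto
    then have "(1 / real_of_int (- n)) *\<^sub>R e' \<in> dual_lattice (span ?Q)" using eq1 by simp
    then have "\<exists>k::int. k \<ge> 2 \<and> (1 / real_of_int k) *\<^sub>R e' \<in> dual_lattice (span ?Q)"
      using k2 by blast
    then show False using prim unfolding primitive_in_def by blast
  qed
  then have "e' = pr T e" using e'eq n by simp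
  then show ?thesis using that e by blast
qed

end

context nefctx begin

lemma Q_reflexive: assumes T: "T \<in> Tc" shows "reflexive (msum T)"
proof -
  have TP: "T \<subseteq> Parts" using Tc_sub[OF T] .
  let ?Q = "msum T"
  have "?Q = {x \<in> span ?Q. \<forall>e'\<in>facet_normals ?Q. inner x e' \<ge> -1}"
  proof (intro equalityI subsetI)
    fix x assume x: "x \<in> ?Q"
    have xs: "x \<in> span ?Q" using x by (rule span_base)
    have "inner x e' \<ge> -1" if e': "e' \<in> facet_normals ?Q" for e'
    proof -
      obtain e where e: "e \<in> ET T" "e' = pr T e" using normal_is_pr[OF T e'] by blast
      have "inner x e \<ge> -1" using Q_mem_iff[OF T xs] x e(1) by blast
      then show ?thesis using pr_inner[OF xs] e(2) by simp
    qed
    then show "x \<in> {x \<in> span ?Q. \<forall>e'\<in>facet_normals ?Q. inner x e' \<ge> -1}" using xs by blast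
  next
    fix x assume "x \<in> {x \<in> span ?Q. \<forall>e'\<in>facet_normals ?Q. inner x e' \<ge> -1}"
    then have xs: "x \<in> span ?Q" and all: "\<And>e'. e' \<in> facet_normals ?Q \<Longrightarrow> inner x e' \<ge> -1" by auto
    show "x \<in> ?Q"
    proof (rule ccontr)
      assume xn: "x \<notin> ?Q"
      then obtain e1 where e1: "e1 \<in> ET T" "\<not> inner x e1 \<ge> -1" using Q_mem_iff[OF T xs] by blast
      define s where "s = Max ((\<lambda>e. - inner x e) ` ET T)"
      have fin: "finite ((\<lambda>e. - inner x e) ` ET T)" using ET_finite by simp
      have sge: "- inner x e \<le> s" if "e \<in> ET T" for e
        unfolding s_def using fin that by (intro Max_ge) auto
      have s1: "s > 1" using sge[OF e1(1)] e1(2) by simp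
      have "s \<in> (\<lambda>e. - inner x e) ` ET T" unfolding s_def using fin e1(1) by (intro Max_in) auto
      then obtain e0 where e0: "e0 \<in> ET T" "- inner x e0 = s" by auto
      define y where "y = (1 / s) *\<^sub>R x"
      have ys: "y \<in> span ?Q" unfolding y_def using xs by (rule span_scale)
      have iy: "inner y e = inner x e / s" for e unfolding y_def by simp
      have "\<forall>e\<in>ET T. inner y e \<ge> -1"
      proof
        fix e assume e: "e \<in> ET T"
        have "- inner x e \<le> s" using sge[OF e] .
        then show "inner y e \<ge> -1" using s1 unfolding iy by (simp add: field_simps)
      qed
      then have yQ: "y \<in> ?Q" using Q_mem_iff[OF T ys] by blast
      have y0: "inner y e0 = -1" unfolding iy using e0(2) s1 by (simp add: field_simps)
      have ynr: "y \<notin> rel_interior ?Q"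
      proof
        assume "y \<in> rel_interior ?Q"
        then obtain r where r: "r > 0" "ball y r \<inter> affine hull ?Q \<subseteq> ?Q"
          using mem_rel_interior_ball by blast
        define d where "d = r / (2 * (norm y + 1))"
        have d0: "d > 0" unfolding d_def using r(1) norm_ge_zero[of y] by (intro divide_pos_pos) (simp, smt (verit))
        define y' where "y' = (1 + d) *\<^sub>R y"
        have "y - y' = (- d) *\<^sub>R y" unfolding y'_def by (simp add: algebra_simps)
        then have "dist y y' = d * norm y" unfolding dist_norm using d0 by simp
        also have "\<dots> \<le> d * (norm y + 1)" using d0 by simp
        also have "\<dots> = r / 2" proof - have ny: "norm y + 1 \<noteq> 0" using norm_ge_zero[of y] by linarith show ?thesis unfolding d_def using ny by (simp add: field_simps) qed
        also have "\<dots> < r" using r by simp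
        finally have "y' \<in> ball y r" by simp
        moreover have "y' \<in> affine hull ?Q" unfolding Tc_aff[OF T] y'_def using ys by (rule span_scale)
        ultimately have "y' \<in> ?Q" using r by blast
        moreover have y's: "y' \<in> span ?Q" unfolding y'_def using ys by (rule span_scale)
        ultimately have "inner y' e0 \<ge> -1" using Q_mem_iff[OF T y's] e0(1) by blast
        moreover have "inner y' e0 = - (1 + d)" unfolding y'_def using y0 by simp
        ultimately show False using d0 by simp
      qed
      have "y \<in> rel_frontier ?Q" unfolding rel_frontier_def using yQ ynr closure_subset by blast
      moreover have "polyhedron ?Q"
        using polytope_imp_polyhedron lattice_polytope_props(4)[OF msum_lat[OF TP]] by blast
      ultimately obtain F where F: "F facet_of ?Q" "y \<in> F"
        using rel_frontier_of_polyhedron by blast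
      obtain e where e: "e \<in> ET T" "F \<subseteq> {x. inner x e = -1}" using facet_tight[OF T F(1)] by blast
      have "pr T e \<in> facet_normals ?Q" using pr_normal[OF T F(1) e] .
      then have "inner x (pr T e) \<ge> -1" using all by blast
      moreover have "inner x (pr T e) = inner x e" using pr_inner[OF xs] .
      moreover have "inner y e = -1" using e F by auto
      then have "inner x e = -s" unfolding iy using s1 by (simp add: field_simps)
      ultimately show False using s1 by simp
    qed
  qed
  then show ?thesis unfolding reflexive_def using msum_lat[OF TP] by blast
qed

lemma parts_in_Tc: assumes T: "T \<in> Tc" shows "parts_in Parts (msum T) = T"
  unfolding parts_in_def using part_in[OF T] part_sub[of _ T] Tc_sub[OF T] by blast

lemma Q_nef: assumes T: "T \<in> Tc" and ne: "T \<noteq> {}" shows "nef_partition (msum T) T"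
proof -
  have TP: "T \<subseteq> Parts" using Tc_sub[OF T] .
  have a1: "finite T" using TP Parts_fin finite_subset by blast
  have a2: "\<forall>D\<in>T. lattice_polytope D \<and> D \<noteq> {0}" using TP Parts_lat Parts_nz by blast
  have a3: "\<forall>D\<in>T. \<forall>e'\<in>facet_normals (msum T). - (INF x\<in>D. inner x e') \<in> {0, 1}"
  proof (intro ballI)
    fix D e' assume D: "D \<in> T" and e': "e' \<in> facet_normals (msum T)"
    obtain e where e: "e \<in> ET T" "e' = pr T e" using normal_is_pr[OF T e'] by blast
    have "(\<lambda>x. inner x e') ` D = (\<lambda>x. inner x e) ` D"
    proof (rule image_cong)
      fix x assume "x \<in> D"
      then have "x \<in> span (msum T)" using part_sub[OF D TP] by (intro span_base) blast
      then show "inner x e' = inner x e" using pr_inner e(2) by simp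
    qed simp
    then have "(INF x\<in>D. inner x e') = hh D e" unfolding hh_def by simp
    moreover have "hh D e = 0 \<or> hh D e = -1" using Parts_nef[of D e] D TP ET_FN[OF e(1)] by blast
    ultimately show "- (INF x\<in>D. inner x e') \<in> {0, 1}" by auto
  qed
  show ?thesis unfolding nef_partition_def using a1 a2 a3 ne by blast
qed

definition G :: "(real^'d) set \<Rightarrow> (real^'d) set set" where
  "G D = (SOME T. (T \<in> Tc \<and> D \<in> T) \<and> (\<forall>U. (U \<in> Tc \<and> D \<in> U) \<longrightarrow> card T \<le> card U))"

lemma G_basic: assumes D: "D \<in> Parts"
  shows "G D \<in> Tc" "D \<in> G D" "\<And>U. U \<in> Tc \<Longrightarrow> D \<in> U \<Longrightarrow> card (G D) \<le> card U"
proof -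
  have "\<exists>T. (T \<in> Tc \<and> D \<in> T) \<and> (\<forall>U. (U \<in> Tc \<and> D \<in> U) \<longrightarrow> card T \<le> card U)"
    using ex_has_least_nat[of "\<lambda>T. T \<in> Tc \<and> D \<in> T" Parts card] Tc_Parts D by blast
  then have "(G D \<in> Tc \<and> D \<in> G D) \<and> (\<forall>U. (U \<in> Tc \<and> D \<in> U) \<longrightarrow> card (G D) \<le> card U)"
    unfolding G_def by (rule someI_ex)
  then show "G D \<in> Tc" "D \<in> G D" "\<And>U. U \<in> Tc \<Longrightarrow> D \<in> U \<Longrightarrow> card (G D) \<le> card U" by auto
qed

lemma G_min: assumes D: "D \<in> Parts" and U: "U \<in> Tc" "D \<in> U" shows "G D \<subseteq> U"
proof -
  have I: "G D \<inter> U \<in> Tc" using Tc_Int G_basic(1)[OF D] U(1) by blast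
  have "D \<in> G D \<inter> U" using G_basic(2)[OF D] U(2) by blast
  then have "card (G D) \<le> card (G D \<inter> U)" using G_basic(3)[OF D I] by blast
  moreover have "finite (G D)" using Tc_sub[OF G_basic(1)[OF D]] Parts_fin finite_subset by blast
  ultimately have "G D \<inter> U = G D" using card_subset_eq[of "G D" "G D \<inter> U"] card_mono[of "G D" "G D \<inter> U"]
    by (meson Int_lower1 card_subset_eq le_antisym card_mono)
  then show ?thesis by blast
qed

lemma G_eq: assumes D: "D \<in> Parts" and D': "D' \<in> Parts" and DD: "D \<in> G D'" shows "G D = G D'"
proof
  show "G D \<subseteq> G D'" using G_min[OF D G_basic(1)[OF D'] DD] .
  show "G D' \<subseteq> G D"
  proof (cases "D' \<in> G D")
    case True
    then show ?thesis using G_min[OF D' G_basic(1)[OF D]] by blast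
  next
    case False
    have "G D' - G D \<in> Tc" using Tc_diff G_basic(1) D D' by blast
    moreover have "D' \<in> G D' - G D" using False G_basic(2)[OF D'] by blast
    ultimately have "G D' \<subseteq> G D' - G D" using G_min[OF D'] by blast
    then show ?thesis using DD G_basic(2)[OF D] by blast
  qed
qed

lemma G_irred: assumes D: "D \<in> Parts" shows "\<not> reducible (G D)"
proof
  assume "reducible (G D)"
  then obtain T where T: "T \<subseteq> G D" "T \<noteq> {}" "T \<noteq> G D" "0 \<in> rel_interior (msum T)"
    unfolding reducible_def by blast
  have TP: "T \<subseteq> Parts" using T(1) Tc_sub[OF G_basic(1)[OF D]] by blast
  then have TT: "T \<in> Tc" using T(4) Tc_def by blast
  obtain D1 where D1: "D1 \<in> T" using T(2) by blast
  have D1P: "D1 \<in> Parts" using D1 TP by blast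
  have "G D1 \<subseteq> T" using G_min[OF D1P TT D1] .
  moreover have "G D1 = G D" using G_eq[OF D1P D] D1 T(1) by blast
  ultimately show False using T(1,3) by blast
qed

lemma G_sub: "D \<in> Parts \<Longrightarrow> G D \<subseteq> Parts" using Tc_sub G_basic(1) by blast

lemma G_disj: assumes "D \<in> Parts" "D' \<in> Parts" "G D \<noteq> G D'" shows "G D \<inter> G D' = {}"
proof (rule ccontr)
  assume "G D \<inter> G D' \<noteq> {}"
  then obtain D'' where "D'' \<in> G D" "D'' \<in> G D'" by blast
  moreover have "D'' \<in> Parts" using calculation G_sub assms by blast
  ultimately have "G D'' = G D" "G D'' = G D'" using G_eq assms by blast+
  then show False using assms(3) by simp
qed

lemma G_inj: assumes "D \<in> Parts" "D' \<in> Parts" "msum (G D) = msum (G D')" shows "G D = G D'"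
proof -
  have "D \<subseteq> msum (G D)" using part_sub G_basic(2) G_sub assms(1) by blast
  then have "D \<in> G D'" using part_in[OF G_basic(1)[OF assms(2)] assms(1)] assms(3) by simp
  then show ?thesis using G_eq assms by blast
qed

end

context nefctx begin

lemma span_plus0: fixes A B :: "(real^'d) set" assumes "0 \<in> A" "0 \<in> B"
  shows "span (A + B) = span (A \<union> B)"
proof (rule subset_antisym)
  have "A + B \<subseteq> span (A \<union> B)"
  proof
    fix x assume "x \<in> A + B"
    then obtain a b where "a \<in> A" "b \<in> B" "x = a + b" by (auto simp: set_plus_iff)
    then show "x \<in> span (A \<union> B)" by (auto intro: span_add span_base)
  qed
  then show "span (A + B) \<subseteq> span (A \<union> B)" by (intro span_minimal) auto
  have "A \<union> B \<subseteq> A + B"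
  proof
    fix x assume "x \<in> A \<union> B"
    then show "x \<in> A + B"
    proof
      assume "x \<in> A" then show ?thesis using set_plus_intro[of x A 0 B] assms by simp
    next
      assume "x \<in> B" then show ?thesis using set_plus_intro[of 0 A x B] assms by simp
    qed
  qed
  then show "span (A \<union> B) \<subseteq> span (A + B)" by (rule span_mono)
qed

lemma dim_union: assumes T: "T \<in> Tc" and U: "U \<in> Tc" and disj: "T \<inter> U = {}"
  shows "dim (msum (T \<union> U)) = dim (msum T) + dim (msum U)"
proof -
  have TP: "T \<subseteq> Parts" and UP: "U \<subseteq> Parts" using Tc_sub T U by auto
  have "msum (T \<union> U) = msum T + msum ((T \<union> U) - T)" using msum_split[of T "T \<union> U"] TP UP by blast
  also have "(T \<union> U) - T = U" using disj by blast
  finally have eq: "msum (T \<union> U) = msum T + msum U" .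
  let ?A = "span (msum T)" and ?B = "span (msum U)"
  have "dim (msum (T \<union> U)) = dim (span (msum T + msum U))" unfolding eq by simp
  also have "\<dots> = dim (span (msum T \<union> msum U))"
    using span_plus0[OF zero_in[OF TP] zero_in[OF UP]] by simp
  also have "\<dots> = dim {x + y |x y. x \<in> ?A \<and> y \<in> ?B}" by (simp add: span_Un)
  finally have d1: "dim (msum (T \<union> U)) = dim {x + y |x y. x \<in> ?A \<and> y \<in> ?B}" .
  have "?A \<inter> ?B \<subseteq> {0}"
  proof
    fix x assume x: "x \<in> ?A \<inter> ?B"
    then have "x \<in> LL T" using Tc_span_sub[OF T] by blast
    moreover have "?B \<subseteq> span (msum (Parts - T))"
      using msum_mono[of U "Parts - T"] UP disj by (intro span_mono) blast
    then have "x \<in> LL (Parts - T)" using x Tc_span_sub[OF compl_Tc[OF T]] by blast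
    ultimately show "x \<in> {0}" using LL_inter[OF TP] by blast
  qed
  then have z: "dim (?A \<inter> ?B) = 0" by simp
  have s: "dim {x + y |x y. x \<in> ?A \<and> y \<in> ?B} + dim (?A \<inter> ?B) = dim ?A + dim ?B"
    by (rule dim_sums_Int) simp_all
  have "dim ?A = dim (msum T)" "dim ?B = dim (msum U)" by simp_all
  then show ?thesis using s z d1 by linarith
qed

lemma union_atoms: "finite B \<Longrightarrow> B \<subseteq> G ` Parts \<Longrightarrow>
    \<Union>B \<in> Tc \<and> (\<Sum>X\<in>B. dim (msum X)) = dim (msum (\<Union>B))"
proof (induction B rule: finite_induct)
  case empty
  then show ?case using Tc_empty by (simp add: msum_empty)
next
  case (insert X B)
  then obtain D where D: "D \<in> Parts" "X = G D" by blast
  have IH: "\<Union>B \<in> Tc" "(\<Sum>X\<in>B. dim (msum X)) = dim (msum (\<Union>B))" using insert by auto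
  have XT: "X \<in> Tc" using D G_basic by blast
  have disj: "X \<inter> \<Union>B = {}"
  proof -
    have "X \<inter> Y = {}" if Y: "Y \<in> B" for Y
    proof -
      obtain D' where D': "D' \<in> Parts" "Y = G D'" using Y insert(4) by blast
      have "X \<noteq> Y" using Y insert(2) by blast
      then show ?thesis using G_disj[OF D(1) D'(1)] D D' by simp
    qed
    then show ?thesis by blast
  qed
  have "\<Union>(insert X B) = X \<union> \<Union>B" by simp
  moreover have "X \<union> \<Union>B \<in> Tc" using Tc_Un[OF XT IH(1)] .
  moreover have "dim (msum (X \<union> \<Union>B)) = dim (msum X) + dim (msum (\<Union>B))"
    using dim_union[OF XT IH(1) disj] .
  ultimately show ?case using insert(1,2) IH(2) by simp
qed

lemma msum_Union_disj:
  assumes "finite I" "\<forall>i\<in>I. f i \<subseteq> Parts" "\<forall>i\<in>I. \<forall>j\<in>I. i \<noteq> j \<longrightarrow> f i \<inter> f j = {}"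
  shows "(\<Sum>i\<in>I. msum (f i)) = msum (\<Union>(f ` I))"
proof -
  have "\<forall>i\<in>I. finite (f i)" using assms(2) Parts_fin finite_subset by blast
  then show ?thesis unfolding msum_def using sum.UNION_disjoint[OF assms(1) _ assms(3), of "\<lambda>P. P"]
    by simp
qed

definition Sdec where "Sdec = msum ` G ` Parts"

lemma atoms_fin: "finite (G ` Parts)" using Parts_fin by simp

lemma atoms_Union: "\<Union>(G ` Parts) = Parts"
  using G_sub G_basic(2) by blast

lemma atoms_disj: "\<forall>X\<in>G ` Parts. \<forall>Y\<in>G ` Parts. X \<noteq> Y \<longrightarrow> X \<inter> Y = {}"
  using G_disj by blast

lemma msum_inj: "inj_on msum (G ` Parts)"
  by (rule inj_onI) (use G_inj in blast)

lemma Sdec_msum: "msum Sdec = Delta"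
proof -
  have "msum Sdec = (\<Sum>X\<in>G ` Parts. msum X)"
    unfolding Sdec_def msum_def using sum.reindex[OF msum_inj, of "\<lambda>P. P"] by (simp add: msum_def)
  also have "\<dots> = msum (\<Union>(id ` (G ` Parts)))"
    using msum_Union_disj[OF atoms_fin, of id] atoms_disj G_sub by auto
  also have "\<dots> = Delta" using atoms_Union Delta_msum by simp
  finally show ?thesis .
qed

lemma Sdec_dim: "int CARD('d) = (\<Sum>Q\<in>Sdec. aff_dim Q)"
proof -
  have "(\<Sum>Q\<in>Sdec. aff_dim Q) = (\<Sum>X\<in>G ` Parts. aff_dim (msum X))"
    unfolding Sdec_def using sum.reindex[OF msum_inj, of aff_dim] by simp
  also have "\<dots> = (\<Sum>X\<in>G ` Parts. int (dim (msum X)))"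
    using Tc_affdim G_basic(1) by (intro sum.cong) auto
  also have "\<dots> = int (\<Sum>X\<in>G ` Parts. dim (msum X))" by simp
  also have "\<dots> = int (dim (msum Parts))"
    using union_atoms[OF atoms_fin] atoms_Union by simp
  also have "\<dots> = aff_dim (msum Parts)" using Tc_affdim[OF Tc_Parts] by simp
  also have "\<dots> = int CARD('d)" using full Delta_msum by simp
  finally show ?thesis by simp
qed

lemma Sdec_dec: "irreducible_decomposition Delta Parts Sdec"
proof -
  have a1: "finite Sdec" unfolding Sdec_def using Parts_fin by simp
  have a2: "Sdec \<noteq> {}" unfolding Sdec_def using Parts_ne by simp
  have a3: "\<forall>Q\<in>Sdec. lattice_polytope Q \<and> Q \<subseteq> Delta"
    unfolding Sdec_def using msum_lat msum_sub_Delta G_sub by blast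
  have a4: "\<forall>Q\<in>Sdec. 0 \<in> rel_interior Q \<and> reflexive Q \<and> nef_partition Q (parts_in Parts Q)
      \<and> irreducible_nef (parts_in Parts Q)"
  proof
    fix Q assume "Q \<in> Sdec"
    then obtain D where D: "D \<in> Parts" "Q = msum (G D)" unfolding Sdec_def by blast
    have GT: "G D \<in> Tc" using G_basic(1)[OF D(1)] .
    have "0 \<in> rel_interior Q" using GT D(2) Tc_def by blast
    moreover have "reflexive Q" using Q_reflexive[OF GT] D(2) by simp
    moreover have "parts_in Parts Q = G D" using parts_in_Tc[OF GT] D(2) by simp
    moreover have "nef_partition Q (G D)" using Q_nef[OF GT] G_basic(2)[OF D(1)] D(2) by blast
    moreover have "irreducible_nef (G D)" unfolding irreducible_nef_def using G_irred[OF D(1)] .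
    ultimately show "0 \<in> rel_interior Q \<and> reflexive Q \<and> nef_partition Q (parts_in Parts Q)
      \<and> irreducible_nef (parts_in Parts Q)" by simp
  qed
  show ?thesis unfolding irreducible_decomposition_def direct_sum_split_def
    using a1 a2 a3 a4 Sdec_msum[symmetric] Sdec_dim by blast
qed

lemma Sdec_unique: assumes S': "irreducible_decomposition Delta Parts S'" shows "S' = Sdec"
proof -
  have fin: "finite S'" and dm: "Delta = msum S'"
    and each: "\<And>Q. Q \<in> S' \<Longrightarrow> 0 \<in> rel_interior Q \<and> reflexive Q \<and> nef_partition Q (parts_in Parts Q)"
    and irr: "\<And>Q. Q \<in> S' \<Longrightarrow> irreducible_nef (parts_in Parts Q)"
    using S' unfolding irreducible_decomposition_def direct_sum_split_def by auto
  have claim: "\<exists>D\<in>Parts. parts_in Parts Q = G D \<and> Q = msum (G D)" if Q: "Q \<in> S'" for Q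
  proof -
    let ?T = "parts_in Parts Q"
    have TP: "?T \<subseteq> Parts" unfolding parts_in_def by blast
    have nefQ: "nef_partition Q ?T" using each[OF Q] by blast
    then have Qeq: "Q = msum ?T" and Tne: "?T \<noteq> {}" unfolding nef_partition_def by auto
    have TT: "?T \<in> Tc" unfolding Tc_def using TP each[OF Q] Qeq by auto
    obtain D where D: "D \<in> ?T" using Tne by blast
    have DP: "D \<in> Parts" using D TP by blast
    have sub: "G D \<subseteq> ?T" using G_min[OF DP TT D] .
    have "G D = ?T"
    proof (rule ccontr)
      assume ne: "G D \<noteq> ?T"
      have "0 \<in> rel_interior (msum (G D))" using G_basic(1)[OF DP] Tc_def by blast
      moreover have "G D \<noteq> {}" using G_basic(2)[OF DP] by blast
      ultimately have "reducible ?T" unfolding reducible_def using sub ne by blast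
      then show False using irr[OF Q] unfolding irreducible_nef_def by blast
    qed
    then show ?thesis using DP Qeq by auto
  qed
  show ?thesis
  proof
    show "S' \<subseteq> Sdec" unfolding Sdec_def using claim by blast
    show "Sdec \<subseteq> S'"
    proof
      fix X assume "X \<in> Sdec"
      then obtain D where D: "D \<in> Parts" "X = msum (G D)" unfolding Sdec_def by blast
      define f where "f Q = parts_in Parts Q" for Q
      have fsub: "\<forall>Q\<in>S'. f Q \<subseteq> Parts" unfolding f_def parts_in_def by blast
      have fdisj: "\<forall>Q1\<in>S'. \<forall>Q2\<in>S'. Q1 \<noteq> Q2 \<longrightarrow> f Q1 \<inter> f Q2 = {}"
      proof (intro ballI impI)
        fix Q1 Q2 assume Q: "Q1 \<in> S'" "Q2 \<in> S'" "Q1 \<noteq> Q2"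
        obtain D1 where D1: "D1 \<in> Parts" "f Q1 = G D1" "Q1 = msum (G D1)" using claim[OF Q(1)] f_def by blast
        obtain D2 where D2: "D2 \<in> Parts" "f Q2 = G D2" "Q2 = msum (G D2)" using claim[OF Q(2)] f_def by blast
        have "G D1 \<noteq> G D2" using Q(3) D1(3) D2(3) by auto
        then show "f Q1 \<inter> f Q2 = {}" using G_disj[OF D1(1) D2(1)] D1(2) D2(2) by simp
      qed
      have "Delta = (\<Sum>Q\<in>S'. Q)" using dm msum_def by simp
      also have "\<dots> = (\<Sum>Q\<in>S'. msum (f Q))"
      proof (rule sum.cong)
        fix Q assume "Q \<in> S'"
        then obtain D1 where "f Q = G D1" "Q = msum (G D1)" using claim f_def by blast
        then show "Q = msum (f Q)" by simp
      qed simp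
      also have "\<dots> = msum (\<Union>(f ` S'))" using msum_Union_disj[OF fin fsub fdisj] .
      finally have dU: "Delta = msum (\<Union>(f ` S'))" .
      have "f ` S' \<subseteq> G ` Parts" using claim f_def by blast
      then have UT: "\<Union>(f ` S') \<in> Tc" using union_atoms fin by blast
      have "D \<subseteq> Delta" using part_sub[OF D(1)] Delta_msum by blast
      then have "D \<in> \<Union>(f ` S')" using part_in[OF UT D(1)] dU by simp
      then obtain Q where Q: "Q \<in> S'" "D \<in> f Q" by blast
      obtain D' where D': "D' \<in> Parts" "f Q = G D'" "Q = msum (G D')" using claim[OF Q(1)] f_def by blast
      have "G D = G D'" using G_eq[OF D(1) D'(1)] Q(2) D'(2) by simp
      then show "X \<in> S'" using D(2) D'(3) Q(1) by simp
    qed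
  qed
qed

lemma main: "\<exists>!S. irreducible_decomposition Delta Parts S"
  using Sdec_dec Sdec_unique by blast

end

theorem mainTheorem6:
  fixes Delta :: "(real^'d) set" and Parts :: "(real^'d) set set"
  assumes "aff_dim Delta = int CARD('d)"
    and "reflexive Delta"
    and "nef_partition Delta Parts"
  shows "\<exists>!S. irreducible_decomposition Delta Parts S"
proof -
  interpret nefctx Delta Parts by (unfold_locales) (rule assms)+
  show ?thesis by (rule main)
qed

end
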